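(* Let $n,g,k$ be integers with $k\ge1$ and $2\leq g\leq \left\lfloor \frac{n-k-2}{2}\right\rfloor$, and suppose $(n-k)g$ is odd. Let $a,b$ be integers with $a$ even, $b$ odd, $a\geq g+1$, $b\geq g+1$, $a+b=n-k$. Let $H_1$ be a connected $g$-regular graph of order $a$, and $H_2$ a connected graph of order $b$ in which one vertex has degree exactly $g+1$ and every other vertex has degree exactly $g$. Let $K_{1,k-1}$ be a star with center $v$, and let $H^k_n$ be a graph obtained from the disjoint union of $H_1$, $H_2$ and $K_{1,k-1}$ by adding exactly one edge from $v$ to $H_1$ and exactly one edge from $v$ to $H_2$. Then $\kappa^g(H^k_n)=k$.
   Context: For a connected graph $G=(V,E)$ and integer $g\ge0$: a set $F\subseteq V$ is a $g$-good-neighbor faulty set if $|N(v)\cap (V-F)|\geq g$ for every $v\in V-F$; a $g$-good-neighbor cut is such an $F$ with $G-F$ disconnected; $\kappa^g(G)$ is the minimum cardinality of a $g$-good-neighbor cut. *)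

theory Defs
  imports Main
begin

definition sgraph :: "'a set \<Rightarrow> ('a \<Rightarrow> 'a \<Rightarrow> bool) \<Rightarrow> bool" where
  "sgraph V E \<longleftrightarrow> finite V \<and> (\<forall>x y. E x y \<longrightarrow> x \<in> V \<and> y \<in> V)
     \<and> (\<forall>x y. E x y \<longrightarrow> E y x) \<and> (\<forall>x. \<not> E x x)"

definition induce :: "('a \<Rightarrow> 'a \<Rightarrow> bool) \<Rightarrow> 'a set \<Rightarrow> 'a \<Rightarrow> 'a \<Rightarrow> bool" where
  "induce E W = (\<lambda>x y. x \<in> W \<and> y \<in> W \<and> E x y)"

definition nbrs :: "'a set \<Rightarrow> ('a \<Rightarrow> 'a \<Rightarrow> bool) \<Rightarrow> 'a \<Rightarrow> 'a set" where
  "nbrs V E x = {y \<in> V. E x y}"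

definition deg :: "'a set \<Rightarrow> ('a \<Rightarrow> 'a \<Rightarrow> bool) \<Rightarrow> 'a \<Rightarrow> nat" where
  "deg V E x = card (nbrs V E x)"

definition reachable :: "'a set \<Rightarrow> ('a \<Rightarrow> 'a \<Rightarrow> bool) \<Rightarrow> 'a \<Rightarrow> 'a \<Rightarrow> bool" where
  "reachable V E x y \<longleftrightarrow> (\<lambda>u w. u \<in> V \<and> w \<in> V \<and> E u w)\<^sup>*\<^sup>* x y"

definition connected_graph :: "'a set \<Rightarrow> ('a \<Rightarrow> 'a \<Rightarrow> bool) \<Rightarrow> bool" where
  "connected_graph V E \<longleftrightarrow> V \<noteq> {} \<and> (\<forall>x\<in>V. \<forall>y\<in>V. reachable V E x y)"

definition disconnected_graph :: "'a set \<Rightarrow> ('a \<Rightarrow> 'a \<Rightarrow> bool) \<Rightarrow> bool" where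
  "disconnected_graph V E \<longleftrightarrow> (\<exists>x\<in>V. \<exists>y\<in>V. \<not> reachable V E x y)"

definition good_neighbor_faulty :: "'a set \<Rightarrow> ('a \<Rightarrow> 'a \<Rightarrow> bool) \<Rightarrow> nat \<Rightarrow> 'a set \<Rightarrow> bool" where
  "good_neighbor_faulty V E g F \<longleftrightarrow> F \<subseteq> V \<and>
     (\<forall>v \<in> V - F. card (nbrs V E v \<inter> (V - F)) \<ge> g)"

definition good_neighbor_cut :: "'a set \<Rightarrow> ('a \<Rightarrow> 'a \<Rightarrow> bool) \<Rightarrow> nat \<Rightarrow> 'a set \<Rightarrow> bool" where
  "good_neighbor_cut V E g F \<longleftrightarrow> good_neighbor_faulty V E g F \<and>
     disconnected_graph (V - F) (induce E (V - F))"

definition kappa_g :: "'a set \<Rightarrow> ('a \<Rightarrow> 'a \<Rightarrow> bool) \<Rightarrow> nat \<Rightarrow> nat" where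
  "kappa_g V E g = Inf {card F | F. good_neighbor_cut V E g F}"

end

theory Submission
  imports Defs
begin

lemma sym_rtranclp:
  assumes "\<And>x y. R x y \<Longrightarrow> R y x" "R\<^sup>*\<^sup>* x y" shows "R\<^sup>*\<^sup>* y x"
  using assms(2)
proof induction
  case base then show ?case by simp
next
  case (step y z) then show ?case
    by (meson assms(1) converse_rtranclp_into_rtranclp)
qed

lemma reach_lift:
  assumes "reachable A (induce E A) x y" "A \<subseteq> B"
  shows "reachable B (induce E B) x y"
  using assms unfolding reachable_def induce_def
  by (rule_tac rtranclp_mono[THEN predicate2D, rotated]) auto

lemma stay_in:
  assumes "(\<lambda>u w. u \<in> W \<and> w \<in> W \<and> induce E W u w)\<^sup>*\<^sup>* x y" "x \<in> A"
    "\<And>u w. u \<in> A \<Longrightarrow> w \<in> W \<Longrightarrow> E u w \<Longrightarrow> w \<in> A"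
  shows "y \<in> A"
  using assms(1,2)
proof induction
  case base then show ?case .
next
  case (step y z) then show ?case using assms(3) unfolding induce_def by blast
qed

theorem lemma4p2:
  fixes V V1 V2 S :: "'a set" and E :: "'a \<Rightarrow> 'a \<Rightarrow> bool"
    and n g k a b :: nat and v u1 u2 w :: 'a
  assumes graph: "sgraph V E"
    and k: "k \<ge> 1"
    and g: "2 \<le> g" "g \<le> (n - k - 2) div 2"
    and odd_prod: "odd ((n - k) * g)"
    and ab: "even a" "odd b" "a \<ge> g + 1" "b \<ge> g + 1" "a + b = n - k"
    and parts: "V = V1 \<union> V2 \<union> S" "V1 \<inter> V2 = {}" "V1 \<inter> S = {}" "V2 \<inter> S = {}"
    and H1: "card V1 = a" "connected_graph V1 (induce E V1)"
            "\<forall>x\<in>V1. deg V1 (induce E V1) x = g"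
    and H2: "card V2 = b" "connected_graph V2 (induce E V2)"
            "w \<in> V2" "deg V2 (induce E V2) w = g + 1"
            "\<forall>x\<in>V2 - {w}. deg V2 (induce E V2) x = g"
    and star: "card S = k" "v \<in> S" "\<forall>x\<in>S - {v}. E v x"
              "\<forall>x\<in>S. \<forall>y\<in>S. E x y \<longrightarrow> x = v \<or> y = v"
    and links: "u1 \<in> V1" "u2 \<in> V2" "E v u1" "E v u2"
    and only1: "\<forall>x y. E x y \<and> x \<in> V1 \<and> y \<notin> V1 \<longrightarrow> x = u1 \<and> y = v"
    and only2: "\<forall>x y. E x y \<and> x \<in> V2 \<and> y \<notin> V2 \<longrightarrow> x = u2 \<and> y = v"
  shows "kappa_g V E g = k"
proof -
  have finV: "finite V" and inV: "\<And>x y. E x y \<Longrightarrow> x \<in> V \<and> y \<in> V"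
    and symE: "\<And>x y. E x y \<Longrightarrow> E y x" and irr: "\<And>x. \<not> E x x"
    using graph unfolding sgraph_def by blast+
  have finS: "finite S" and fin1: "finite V1" and fin2: "finite V2"
    using finV parts(1) by (auto intro: finite_subset)
  have leaf: "y = v" if "x \<in> S - {v}" "E x y" for x y
  proof -
    have "y \<in> V" using inV that(2) by blast
    moreover have "y \<notin> V1" using only1 symE[OF that(2)] that(1) parts by blast
    moreover have "y \<notin> V2" using only2 symE[OF that(2)] that(1) parts by blast
    ultimately have "y \<in> S" using parts(1) by blast
    then show ?thesis using star(4) that by blast
  qed
  have leafF: "S - {v} \<subseteq> F" if "good_neighbor_faulty V E g F" for F
  proof
    fix x assume x: "x \<in> S - {v}"
    show "x \<in> F"
    proof (rule ccontr)
      assume "x \<notin> F"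
      then have "x \<in> V - F" using x parts(1) by blast
      then have "card (nbrs V E x \<inter> (V - F)) \<ge> g" using that
        unfolding good_neighbor_faulty_def by blast
      moreover have "nbrs V E x \<inter> (V - F) \<subseteq> {v}" using leaf[OF x]
        unfolding nbrs_def by blast
      then have "card (nbrs V E x \<inter> (V - F)) \<le> 1"
        using card_mono[of "{v}"] by fastforce
      ultimately show False using g(1) by linarith
    qed
  qed
  have VS: "V - S = V1 \<union> V2" using parts by blast
  have cutS: "good_neighbor_cut V E g S"
    unfolding good_neighbor_cut_def good_neighbor_faulty_def
  proof (intro conjI ballI)
    show "S \<subseteq> V" using parts by blast
  next
    fix x assume x: "x \<in> V - S"
    show "g \<le> card (nbrs V E x \<inter> (V - S))"
    proof (cases "x \<in> V1")
      case True
      have "nbrs V1 (induce E V1) x \<subseteq> nbrs V E x \<inter> (V - S)"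
        unfolding nbrs_def induce_def using VS parts(1) by blast
      then have "card (nbrs V1 (induce E V1) x) \<le> card (nbrs V E x \<inter> (V - S))"
        by (rule card_mono[rotated]) (use finV in auto)
      then show ?thesis using H1(3) True by (simp add: deg_def)
    next
      case False
      then have x2: "x \<in> V2" using x VS by blast
      have "nbrs V2 (induce E V2) x \<subseteq> nbrs V E x \<inter> (V - S)"
        unfolding nbrs_def induce_def using VS parts(1) by blast
      then have "card (nbrs V2 (induce E V2) x) \<le> card (nbrs V E x \<inter> (V - S))"
        by (rule card_mono[rotated]) (use finV in auto)
      moreover have "deg V2 (induce E V2) x \<ge> g" using H2(4,5) x2
        by (cases "x = w") auto
      ultimately show ?thesis by (simp add: deg_def)
    qed
  next
    have m: "u1 \<in> V - S" "u2 \<in> V - S" using links VS by auto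
    have nr: "\<not> reachable (V - S) (induce E (V - S)) u1 u2"
    proof
      assume "reachable (V - S) (induce E (V - S)) u1 u2"
      then have "u2 \<in> V1" unfolding reachable_def
      proof (rule stay_in)
        show "u1 \<in> V1" by (rule links(1))
        fix u w' assume "u \<in> V1" "w' \<in> V - S" "E u w'"
        then show "w' \<in> V1" using only1 star(2) by blast
      qed
      then show False using links parts by blast
    qed
    show "disconnected_graph (V - S) (induce E (V - S))"
      unfolding disconnected_graph_def using m nr by blast
  qed
  have lower: "k \<le> card F" if F: "good_neighbor_cut V E g F" for F
  proof (rule ccontr)
    assume lt: "\<not> k \<le> card F"
    have fa: "good_neighbor_faulty V E g F" using F unfolding good_neighbor_cut_def by blast
    have sub: "S - {v} \<subseteq> F" by (rule leafF[OF fa])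
    have FV: "F \<subseteq> V" using fa unfolding good_neighbor_faulty_def by blast
    have finF: "finite F" using FV finV finite_subset by blast
    have cS: "card (S - {v}) = k - 1" using star finS by simp
    have "card F \<le> card (S - {v})" using lt cS by linarith
    then have "card (S - {v}) = card F" using card_mono[OF finF sub] by linarith
    then have Feq: "F = S - {v}" using card_subset_eq[OF finF sub] by simp
    let ?W = "V - F"
    have W: "?W = V1 \<union> V2 \<union> {v}" using Feq parts star(2) by blast
    let ?R = "\<lambda>u w. u \<in> ?W \<and> w \<in> ?W \<and> induce E ?W u w"
    have symR: "\<And>x y. ?R x y \<Longrightarrow> ?R y x" unfolding induce_def using symE by blast
    have tov: "?R\<^sup>*\<^sup>* x v" if x: "x \<in> ?W" for x
    proof -
      have "x \<in> V1 \<or> x \<in> V2 \<or> x = v" using x W by blast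
      moreover have "?R\<^sup>*\<^sup>* x v" if "x \<in> V1"
      proof -
        have "reachable V1 (induce E V1) x u1" using H1(2) that links
          unfolding connected_graph_def by blast
        then have "?R\<^sup>*\<^sup>* x u1" using reach_lift[of V1 E x u1 ?W] W
          unfolding reachable_def by blast
        moreover have "?R u1 v" using W links symE unfolding induce_def by blast
        ultimately show ?thesis by (rule rtranclp.rtrancl_into_rtrancl)
      qed
      moreover have "?R\<^sup>*\<^sup>* x v" if "x \<in> V2"
      proof -
        have "reachable V2 (induce E V2) x u2" using H2(2) that links
          unfolding connected_graph_def by blast
        then have "?R\<^sup>*\<^sup>* x u2" using reach_lift[of V2 E x u2 ?W] W
          unfolding reachable_def by blast
        moreover have "?R u2 v" using W links symE unfolding induce_def by blast
        ultimately show ?thesis by (rule rtranclp.rtrancl_into_rtrancl)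
      qed
      ultimately show ?thesis by auto
    qed
    have allr: "\<forall>x\<in>?W. \<forall>y\<in>?W. ?R\<^sup>*\<^sup>* x y"
    proof (intro ballI)
      fix x y assume xy: "x \<in> ?W" "y \<in> ?W"
      show "?R\<^sup>*\<^sup>* x y"
        using tov[OF xy(1)] sym_rtranclp[OF symR tov[OF xy(2)]] by simp
    qed
    have "\<not> disconnected_graph ?W (induce E ?W)"
      unfolding disconnected_graph_def reachable_def using allr by blast
    then show False using F unfolding good_neighbor_cut_def by blast
  qed
  show ?thesis unfolding kappa_g_def
    by (rule cInf_eq_minimum) (use cutS star(1) lower in auto)
qed

end
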